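(* Let $k\ge 4$, $n=2k-1$, $\eta=(\eta_1<\dots<\eta_l)\in\mathbb{D}_k\setminus\{(3,k-3)\}$, and let $Y_{2\eta^*}$ be the Young diagram whose main diagonal consists of exactly the cells $c_{1,1},\dots,c_{l+1,l+1}$ and which satisfies $h_{1,1}=2n-4$, $h_{i,i}=2\eta_{l-(i-2)}$ for $2\le i\le l+1$, and $a(c_{i,i})=l(c_{i,i})+1$ for $1\le i\le l+1$. Let $\lambda$ be the partition whose parts are the hook lengths of the cells of the first column of $Y_{2\eta^*}$. Then $\lambda$ is a partition of $T_n=n(n+1)/2$.
   Context: $\mathbb{D}_N$ is the set of partitions of $N$ into distinct parts, i.e. sequences $(\lambda_1<\dots<\lambda_t)$ of positive integers with sum $N$ and $t\ge 2$. Young diagrams are in English convention: rows top to bottom, columns left to right, $c_{i,j}$ the cell in row $i$, column $j$; arm $a(c_{i,j})$ = number of cells to its right in its row, leg $l(c_{i,j})$ = number of cells below it in its column, hook length $h_{i,j}=a+l+1$. (The hook lengths of the first-column cells of a Young diagram are pairwise distinct; the resulting partition is the complement in $\mathbb{N}_0$ of the numerical set corresponding to the diagram under the Keith–Nath transformation.) *)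

theory Defs
  imports Main
begin

definition distinct_partition :: "nat \<Rightarrow> nat list \<Rightarrow> bool" where
  "distinct_partition N eta \<longleftrightarrow> sorted_wrt (<) eta \<and> (\<forall>x\<in>set eta. 0 < x)
      \<and> sum_list eta = N \<and> length eta \<ge> 2"

text \<open>A Young diagram (English convention) is given by its list of row lengths,
  top to bottom: weakly decreasing positive integers. Rows and columns are 1-indexed.\<close>
definition young :: "nat list \<Rightarrow> bool" where
  "young Y \<longleftrightarrow> sorted_wrt (\<ge>) Y \<and> (\<forall>r\<in>set Y. 0 < r)"

definition cell :: "nat list \<Rightarrow> nat \<Rightarrow> nat \<Rightarrow> bool" where
  "cell Y i j \<longleftrightarrow> 1 \<le> i \<and> i \<le> length Y \<and> 1 \<le> j \<and> j \<le> Y ! (i - 1)"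

definition arm :: "nat list \<Rightarrow> nat \<Rightarrow> nat \<Rightarrow> nat" where
  "arm Y i j = card {j'. j < j' \<and> cell Y i j'}"

definition leg :: "nat list \<Rightarrow> nat \<Rightarrow> nat \<Rightarrow> nat" where
  "leg Y i j = card {i'. i < i' \<and> cell Y i' j}"

definition hook :: "nat list \<Rightarrow> nat \<Rightarrow> nat \<Rightarrow> nat" where
  "hook Y i j = arm Y i j + leg Y i j + 1"

definition first_col_hooks :: "nat list \<Rightarrow> nat list" where
  "first_col_hooks Y = map (\<lambda>i. hook Y i 1) [1..<length Y + 1]"

end

theory Submission
  imports Defs
begin

lemma young_mono:
  assumes "young Y" "i \<le> i'" "i' < length Y"
  shows "Y ! i' \<le> Y ! i"
proof (cases "i = i'")
  case False
  then have "i < i'" using assms by simp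
  then show ?thesis using assms sorted_wrt_nth_less[of "(\<ge>)" Y i i'] unfolding young_def by auto
qed simp

lemma young_pos:
  assumes "young Y" "i < length Y"
  shows "0 < Y ! i"
  using assms unfolding young_def by auto

lemma cell_down:
  assumes "young Y" "cell Y i j" "1 \<le> i'" "i' \<le> i" "1 \<le> j'" "j' \<le> j"
  shows "cell Y i' j'"
proof -
  have "i \<le> length Y" "j \<le> Y!(i-1)" "1 \<le> i" using assms(2) unfolding cell_def by auto
  moreover have "Y!(i-1) \<le> Y!(i'-1)" using young_mono[OF assms(1), of "i' - 1" "i - 1"] assms calculation by simp
  ultimately show ?thesis using assms unfolding cell_def by auto
qed

lemma shift1: "(\<Sum>i\<in>{1..(r::nat)}. f (i - 1)) = (\<Sum>i<r. f i :: nat)"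
  by (induction r) (auto simp: atLeastAtMostSuc_conv)

lemma card_cells:
  "card {(i,j). cell Y i j} = sum_list Y"
proof -
  have eq: "{(i,j). cell Y i j} = (SIGMA i:{1..length Y}. {1..Y!(i-1)})"
    unfolding cell_def by auto
  have "card (SIGMA i:{1..length Y}. {1..Y!(i-1)}) = (\<Sum>i\<in>{1..length Y}. Y!(i-1))"
    by (subst card_SigmaI) auto
  also have "\<dots> = (\<Sum>i<length Y. Y!i)"
    by (rule shift1)
  also have "\<dots> = sum_list Y" by (simp add: sum_list_sum_nth atLeast0LessThan)
  finally show ?thesis using eq by simp
qed

lemma finite_cells: "finite {(i,j). cell Y i j}"
proof -
  have "{(i,j). cell Y i j} \<subseteq> (SIGMA i:{1..length Y}. {1..Y!(i-1)})"
    unfolding cell_def by auto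
  then show ?thesis by (rule finite_subset) auto
qed

definition H :: "nat list \<Rightarrow> nat \<Rightarrow> (nat \<times> nat) set" where
  "H Y m = {(i,j). cell Y i j \<and> min i j = m}"

lemma card_H:
  assumes "cell Y m m"
  shows "card (H Y m) = hook Y m m"
proof -
  let ?A = "{j. m < j \<and> cell Y m j}"
  let ?B = "{i. m < i \<and> cell Y i m}"
  have fA: "finite ?A" by (rule finite_subset[of _ "{..Y!(m-1)}"]) (auto simp: cell_def)
  have fB: "finite ?B" by (rule finite_subset[of _ "{..length Y}"]) (auto simp: cell_def)
  have eq: "H Y m = ({m} \<times> ?A \<union> {(m,m)}) \<union> ?B \<times> {m}"
    using assms unfolding H_def by auto
  have "card (H Y m) = card ({m} \<times> ?A \<union> {(m,m)}) + card (?B \<times> {m})"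
    unfolding eq by (rule card_Un_disjoint) (use fA fB in auto)
  also have "card ({m} \<times> ?A \<union> {(m,m)}) = card ({m} \<times> ?A) + card {(m,m)}"
    by (rule card_Un_disjoint) (use fA in auto)
  also have "card (?B \<times> {m}) = card ?B" by (simp add: card_cartesian_product)
  finally show ?thesis unfolding hook_def arm_def leg_def
    by (simp add: card_cartesian_product_singleton)
qed

lemma cells_union:
  assumes "young Y" "\<forall>i\<ge>1. cell Y i i \<longleftrightarrow> i \<le> d"
  shows "{(i,j). cell Y i j} = (\<Union>m\<in>{1..d}. H Y m)"
proof
  show "{(i,j). cell Y i j} \<subseteq> (\<Union>m\<in>{1..d}. H Y m)"
  proof clarify
    fix i j assume c: "cell Y i j"
    then have "1 \<le> i" "1 \<le> j" unfolding cell_def by auto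
    then have "cell Y (min i j) (min i j)" using cell_down[OF assms(1) c] by simp
    then have "min i j \<in> {1..d}" using assms(2) \<open>1 \<le> i\<close> \<open>1 \<le> j\<close> by auto
    then show "(i, j) \<in> (\<Union>m\<in>{1..d}. H Y m)" using c unfolding H_def by blast
  qed
qed (auto simp: H_def)

lemma sum_hooks:
  assumes "young Y" "\<forall>i\<ge>1. cell Y i i \<longleftrightarrow> i \<le> d"
  shows "sum_list Y = (\<Sum>m\<in>{1..d}. hook Y m m)"
proof -
  have "sum_list Y = card (\<Union>m\<in>{1..d}. H Y m)"
    using card_cells cells_union[OF assms] by metis
  also have "\<dots> = (\<Sum>m\<in>{1..d}. card (H Y m))"
  proof (rule card_UN_disjoint)
    show "\<forall>i\<in>{1..d}. finite (H Y i)"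
      by (auto intro: finite_subset[OF _ finite_cells] simp: H_def)
    show "\<forall>i\<in>{1..d}. \<forall>j\<in>{1..d}. i \<noteq> j \<longrightarrow> H Y i \<inter> H Y j = {}"
      by (auto simp: H_def)
  qed simp
  also have "\<dots> = (\<Sum>m\<in>{1..d}. hook Y m m)"
    by (rule sum.cong) (use assms(2) card_H in auto)
  finally show ?thesis .
qed

lemma first_col:
  assumes "young Y" "1 \<le> i" "i \<le> length Y"
  shows "hook Y i 1 = Y!(i-1) + length Y - i"
proof -
  have "{j'. 1 < j' \<and> cell Y i j'} = {2..Y!(i-1)}" using assms unfolding cell_def by auto
  moreover have "{i'. i < i' \<and> cell Y i' 1} = {i<..length Y}"
  proof -
    have "\<And>x. 1 \<le> x \<Longrightarrow> x \<le> length Y \<Longrightarrow> 1 \<le> Y!(x-1)"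
    proof -
      fix x :: nat assume "1 \<le> x" "x \<le> length Y"
      then have "x - 1 < length Y" by simp
      then show "1 \<le> Y!(x-1)" using young_pos[OF assms(1)] by (simp add: Suc_le_eq)
    qed
    then show ?thesis using assms unfolding cell_def by auto
  qed
  moreover have "0 < Y!(i-1)" using young_pos[OF assms(1), of "i-1"] assms by simp
  ultimately show ?thesis using assms
    unfolding hook_def arm_def leg_def by simp
qed

lemma gauss2: "2 * (\<Sum>i\<in>{1..r}. r - i) = r * (r - 1 :: nat)"
proof (induction r)
  case (Suc r)
  have "(\<Sum>i\<in>{1..Suc r}. Suc r - i) = (\<Sum>i\<in>{1..r}. r - i) + r"
  proof -
    have "(\<Sum>i\<in>{1..Suc r}. Suc r - i) = (\<Sum>i\<in>{1..r}. Suc r - i) + 0" by simp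
    also have "(\<Sum>i\<in>{1..r}. Suc r - i) = (\<Sum>i\<in>{1..r}. (r - i) + 1)"
      by (rule sum.cong) auto
    also have "\<dots> = (\<Sum>i\<in>{1..r}. r - i) + (\<Sum>i\<in>{1..r}. 1)"
      by (rule sum.distrib)
    finally show ?thesis by simp
  qed
  then show ?case using Suc by (cases r) (auto simp: algebra_simps)
qed simp

theorem proposition3p21:
  fixes k n :: nat and eta Y :: "nat list"
  assumes "k \<ge> 4" and "n = 2 * k - 1"
    and "distinct_partition k eta" and "eta \<noteq> [3, k - 3]"
    and "young Y"
    and "\<forall>i\<ge>1. cell Y i i \<longleftrightarrow> i \<le> length eta + 1"
    and "hook Y 1 1 = 2 * n - 4"
    and "\<forall>i. 2 \<le> i \<and> i \<le> length eta + 1 \<longrightarrow>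
           hook Y i i = 2 * eta ! (length eta - (i - 2) - 1)"
    and "\<forall>i. 1 \<le> i \<and> i \<le> length eta + 1 \<longrightarrow> arm Y i i = leg Y i i + 1"
  shows "sum_list (first_col_hooks Y) = n * (n + 1) div 2
         \<and> (\<forall>x\<in>set (first_col_hooks Y). 0 < x)"
proof
  show "\<forall>x\<in>set (first_col_hooks Y). 0 < x" unfolding first_col_hooks_def hook_def by auto
  define l where "l = length eta"
  define r where "r = length Y"
  have c11: "cell Y 1 1" using assms(6) by simp
  then have r1: "r \<ge> 1" unfolding cell_def r_def by simp
  have "{i'. 1 < i' \<and> cell Y i' 1} = {1<..r}"
  proof -
    have "\<And>x. 1 \<le> x \<Longrightarrow> x \<le> length Y \<Longrightarrow> 1 \<le> Y!(x-1)"
    proof -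
      fix x :: nat assume "1 \<le> x" "x \<le> length Y"
      then have "x - 1 < length Y" by simp
      then show "1 \<le> Y!(x-1)" using young_pos[OF assms(5)] by (simp add: Suc_le_eq)
    qed
    then show ?thesis unfolding cell_def r_def by auto
  qed
  then have leg1: "leg Y 1 1 = r - 1" unfolding leg_def by simp
  have "arm Y 1 1 = leg Y 1 1 + 1" using assms(9) by simp
  then have "2 * r = 2 * n - 4" using assms(7) leg1 r1 unfolding hook_def by simp
  then have rn: "r = n - 2" by simp
  have sY: "sum_list Y = (\<Sum>m\<in>{1..l+1}. hook Y m m)"
    unfolding l_def by (rule sum_hooks[OF assms(5) assms(6)])
  also have "\<dots> = hook Y 1 1 + (\<Sum>m\<in>{2..l+1}. hook Y m m)"
  proof -
    have "{1..l+1} = insert 1 {2..l+1}" by auto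
    then show ?thesis by simp
  qed
  also have "(\<Sum>m\<in>{2..l+1}. hook Y m m) = (\<Sum>m\<in>{2..l+1}. 2 * eta ! (l - (m - 2) - 1))"
    by (rule sum.cong) (use assms(8) l_def in auto)
  also have "\<dots> = (\<Sum>j<l. 2 * eta ! j)"
    by (rule sum.reindex_bij_witness[where i = "\<lambda>j. l + 1 - j" and j = "\<lambda>m. l - (m - 2) - 1"]) auto
  also have "\<dots> = 2 * k"
    using assms(3) unfolding distinct_partition_def l_def
    by (simp add: sum_list_sum_nth atLeast0LessThan sum_distrib_left[symmetric])
  finally have sY2: "sum_list Y = 2 * n - 4 + 2 * k" using assms(7) by simp
  have "sum_list (first_col_hooks Y) = (\<Sum>i\<in>{1..r}. Y!(i-1) + r - i)"
    unfolding first_col_hooks_def interv_sum_list_conv_sum_set_nat r_def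
  proof (rule sum.cong)
    show "set [1..<length Y + 1] = {1..length Y}" by auto
    fix x assume "x \<in> {1..length Y}"
    then show "hook Y x 1 = Y ! (x - 1) + length Y - x"
      using first_col[OF assms(5), of x] by auto
  qed
  also have "\<dots> = (\<Sum>i\<in>{1..r}. Y!(i-1)) + (\<Sum>i\<in>{1..r}. r - i)"
    by (simp add: sum.distrib[symmetric])
  also have "(\<Sum>i\<in>{1..r}. Y!(i-1)) = sum_list Y"
    using shift1[of "\<lambda>i. Y!i" r] by (simp add: sum_list_sum_nth atLeast0LessThan r_def)
  finally have tot: "2 * sum_list (first_col_hooks Y) = 2 * (2 * n - 4 + 2 * k) + r * (r - 1)"
    using gauss2[of r] sY2 by simp
  have "n * (n + 1) = 2 * (2 * n - 4 + 2 * k) + r * (r - 1)"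
  proof -
    obtain j where j: "k = j + 4" using assms(1) le_Suc_ex by (metis add.commute)
    show ?thesis using j assms(2) rn by (simp add: algebra_simps)
  qed
  then show "sum_list (first_col_hooks Y) = n * (n + 1) div 2" using tot by simp
qed

end
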